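(* Every divergent $T$-orbit of a positive integer and every nontrivial $T$-cycle of positive integers contains an integer congruent to $20\pmod{27}$; i.e. $\{20\bmod 27\}$ is forward sufficient and cycle sufficient.
   Context: $T(x)=x/2$ for $x$ even and $T(x)=(3x+1)/2$ for $x$ odd. A divergent orbit is an unbounded $T$-orbit of a positive integer; a nontrivial cycle is a periodic $T$-orbit of positive integers other than $\{1,2\}$. *)

theory Defs
  imports Main
begin

definition T :: "nat \<Rightarrow> nat" where
  "T x = (if even x then x div 2 else (3 * x + 1) div 2)"

definition T_orbit :: "nat \<Rightarrow> nat set" where
  "T_orbit n = range (\<lambda>k. (T ^^ k) n)"

definition divergent_orbit :: "nat \<Rightarrow> bool" where
  "divergent_orbit n \<longleftrightarrow> n > 0 \<and> \<not> bdd_above (T_orbit n)"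

definition nontrivial_cycle :: "nat set \<Rightarrow> bool" where
  "nontrivial_cycle C \<longleftrightarrow> (\<exists>n>0. (\<exists>p>0. (T ^^ p) n = n) \<and> C = T_orbit n) \<and> C \<noteq> {1, 2}"

end

theory Submission imports Defs begin

definition phi :: "nat \<Rightarrow> nat" where
 "phi r = [2, 2, 1, 2, 1, 1, 2, 2, 0, 2, 2, 1, 2, 2, 1, 2, 2, 0, 2, 2, 2, 2, 1, 1, 2, 2, 2] ! r"

definition bad :: "nat \<Rightarrow> bool" where "bad r \<longleftrightarrow> r = 13 \<or> r = 20 \<or> r = 26"

lemma table0: "\<forall>r\<in>{0,1,2,3,4,5,6,7,8,9,10,11,12,13,14,15,16,17,18,19,20,21,22,23,24,25,26}. \<not> bad r \<longrightarrow>
   (\<not> bad (14*r mod 27) \<longrightarrow> phi (14*r mod 27) \<le> phi r + 1) \<and>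
   (\<not> bad (14*(3*r+1) mod 27) \<longrightarrow> phi (14*(3*r+1) mod 27) + 1 \<le> phi r)"
  unfolding bad_def phi_def
  by simp

lemma r27: "(r::nat) < 27 \<Longrightarrow> r \<in> {0,1,2,3,4,5,6,7,8,9,10,11,12,13,14,15,16,17,18,19,20,21,22,23,24,25,26}" 
proof -
  have "{..<27::nat} = {26,25,24,23,22,21,20,19,18,17,16,15,14,13,12,11,10,9,8,7,6,5,4,3,2,1,0}" by (simp add: lessThan_nat_numeral lessThan_Suc)
  thus "r < 27 \<Longrightarrow> r \<in> {0,1,2,3,4,5,6,7,8,9,10,11,12,13,14,15,16,17,18,19,20,21,22,23,24,25,26}" by auto
qed

lemma Tmod: "T x mod 27 = (if even x then 14*(x mod 27) else 14*(3*(x mod 27)+1)) mod 27"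
proof (cases "even x")
  case True
  then obtain y where x: "x = 2*y" by blast
  have ty: "T x = y" using x by (simp add: T_def)
  have "(14 * (2*y mod 27)) mod 27 = (14*(2*y)) mod 27" by (rule mod_mult_right_eq)
  also have "14*(2*y) = y + y*27" by simp
  also have "(y + y*27) mod 27 = y mod 27" by (rule mod_mult_self1)
  finally have "(14 * (x mod 27)) mod 27 = T x mod 27" using x ty by simp
  thus ?thesis using True by simp
next
  case False
  have h: "2 * T x = 3*x+1" using False by (simp add: T_def)
  have e: "14 * (2 * T x) = T x + T x * 27" by simp
  have "T x mod 27 = (T x + T x * 27) mod 27" by (rule mod_mult_self1[symmetric])
  also have "\<dots> = (14 * (2 * T x)) mod 27" using e by simp
  also have "\<dots> = (14 * (3*x+1)) mod 27" using h by simp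
  also have "\<dots> = (14 * ((3*x+1) mod 27)) mod 27" by (rule mod_mult_right_eq[symmetric])
  also have "(3*x+1) mod 27 = ((3*x) mod 27 + 1) mod 27" by (rule mod_add_left_eq[symmetric])
  also have "(3*x) mod 27 = (3*(x mod 27)) mod 27" by (rule mod_mult_right_eq[symmetric])
  also have "((3*(x mod 27)) mod 27 + 1) mod 27 = (3*(x mod 27) + 1) mod 27" by (rule mod_add_left_eq)
  also have "(14 * ((3*(x mod 27) + 1) mod 27)) mod 27 = (14*(3*(x mod 27)+1)) mod 27" by (rule mod_mult_right_eq)
  finally show ?thesis using False by simp
qed

lemma table: "\<not> bad (x mod 27) \<Longrightarrow>
   (\<not> bad (14*(x mod 27) mod 27) \<longrightarrow> phi (14*(x mod 27) mod 27) \<le> phi (x mod 27) + 1) \<and>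
   (\<not> bad (14*(3*(x mod 27)+1) mod 27) \<longrightarrow> phi (14*(3*(x mod 27)+1) mod 27) + 1 \<le> phi (x mod 27))"
proof -
  assume a: "\<not> bad (x mod 27)"
  have "x mod 27 \<in> {0,1,2,3,4,5,6,7,8,9,10,11,12,13,14,15,16,17,18,19,20,21,22,23,24,25,26}" by (rule r27) simp
  from bspec[OF table0 this] show ?thesis using a by blast
qed

definition W :: "nat \<Rightarrow> nat" where "W x = x * 2 ^ phi (x mod 27)"

lemma Wstep:
  assumes "x > 0" "\<not> bad (x mod 27)" "\<not> bad (T x mod 27)"
  shows "W (T x) \<le> W x" and "odd x \<Longrightarrow> x > 1 \<Longrightarrow> W (T x) < W x"
proof -
  let ?r = "x mod 27"
  have tab: "(\<not> bad (14*?r mod 27) \<longrightarrow> phi (14*?r mod 27) \<le> phi ?r + 1) \<and>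
   (\<not> bad (14*(3*?r+1) mod 27) \<longrightarrow> phi (14*(3*?r+1) mod 27) + 1 \<le> phi ?r)"
    using table assms(2) by blast
  have both: "W (T x) \<le> W x \<and> (odd x \<longrightarrow> x > 1 \<longrightarrow> W (T x) < W x)"
  proof (cases "even x")
    case True
    have s: "T x mod 27 = 14*?r mod 27" using Tmod[of x] True by simp
    have ph: "phi (T x mod 27) \<le> phi ?r + 1" using tab s assms(3) by simp
    have tx: "T x = x div 2" using True by (simp add: T_def)
    have "W (T x) = (x div 2) * 2 ^ phi (T x mod 27)" by (simp add: W_def tx)
    also have "\<dots> \<le> (x div 2) * 2 ^ (phi ?r + 1)" using ph
      by (intro mult_le_mono2 power_increasing) auto
    also have "\<dots> = x * 2 ^ phi ?r" using True by auto
    finally show ?thesis using True by (simp add: W_def)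
  next
    case False
    have s: "T x mod 27 = 14*(3*?r+1) mod 27" using Tmod[of x] False by simp
    have ph: "phi (T x mod 27) + 1 \<le> phi ?r" using tab s assms(3) by simp
    have tx: "2 * T x = 3*x+1" using False by (simp add: T_def)
    have le: "T x \<le> 2 * x" using tx assms(1) by linarith
    have "W (T x) = T x * 2 ^ phi (T x mod 27)" by (simp add: W_def)
    also have "\<dots> \<le> (2*x) * 2 ^ phi (T x mod 27)" using le by simp
    also have "\<dots> = x * 2 ^ (phi (T x mod 27) + 1)" by simp
    also have "\<dots> \<le> x * 2 ^ phi ?r" using ph
      by (intro mult_le_mono2 power_increasing) auto
    finally have A: "W (T x) \<le> W x" by (simp add: W_def)
    have B: "x > 1 \<Longrightarrow> W (T x) < W x"
    proof -
      assume "x > 1"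
      hence lt: "T x < 2 * x" using tx by linarith
      have "W (T x) = T x * 2 ^ phi (T x mod 27)" by (simp add: W_def)
      also have "\<dots> < (2*x) * 2 ^ phi (T x mod 27)" using lt by simp
      also have "\<dots> = x * 2 ^ (phi (T x mod 27) + 1)" by simp
      also have "\<dots> \<le> x * 2 ^ phi ?r" using ph
        by (intro mult_le_mono2 power_increasing) auto
      finally show ?thesis by (simp add: W_def)
    qed
    show ?thesis using A B by blast
  qed
  show "W (T x) \<le> W x" using both by blast
  show "odd x \<Longrightarrow> x > 1 \<Longrightarrow> W (T x) < W x" using both by blast
qed

lemma T_pos: "x > 0 \<Longrightarrow> T x > 0"
  by (auto simp: T_def)

lemma Tk_pos: "n > 0 \<Longrightarrow> (T ^^ k) n > 0"
  by (induction k) (auto simp: T_pos)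

lemma step13: "x mod 27 = 13 \<Longrightarrow> T x mod 27 = 20"
  using Tmod[of x] by simp

lemma trap_aux: "\<forall>x. x mod 27 = 26 \<longrightarrow> \<not> 2^k dvd (x+1) \<longrightarrow> (\<exists>j. (T ^^ j) x mod 27 = 20)"
proof (induction k)
  case 0 then show ?case by simp
next
  case (Suc k)
  show ?case
  proof (intro allI impI)
    fix x :: nat assume x: "x mod 27 = 26" and nd: "\<not> 2 ^ Suc k dvd (x + 1)"
    show "\<exists>j. (T ^^ j) x mod 27 = 20"
    proof (cases "even x")
      case True
      have "T x mod 27 = 13" using Tmod[of x] True x by simp
      hence "T (T x) mod 27 = 20" by (rule step13)
      hence "(T ^^ 2) x mod 27 = 20" by (simp add: numeral_2_eq_2)
      thus ?thesis by blast
    next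
      case False
      have tx: "2 * T x = 3*x+1" using False by (simp add: T_def)
      have s: "T x mod 27 = 26" using Tmod[of x] False x by simp
      have "\<not> 2^k dvd (T x + 1)"
      proof
        assume "2^k dvd (T x + 1)"
        hence "2 * 2^k dvd 2 * (T x + 1)" by (metis dvd_refl mult_dvd_mono)
        hence "2^Suc k dvd 2 * (T x + 1)" by (simp only: power_Suc)
        moreover have eq: "2 * (T x + 1) = 3*(x+1)" using tx by simp
        ultimately have "2^Suc k dvd 3 * (x+1)" by (simp only: eq)
        moreover have "coprime (2^Suc k :: nat) 3" by simp
        ultimately have "2^Suc k dvd (x+1)" using coprime_dvd_mult_right_iff by blast
        thus False using nd by simp
      qed
      then obtain j where "(T ^^ j) (T x) mod 27 = 20" using Suc.IH s by blast
      hence "(T ^^ Suc j) x mod 27 = 20" by (simp add: funpow_Suc_right del: funpow.simps)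
      thus ?thesis by blast
    qed
  qed
qed

lemma trap26: "x mod 27 = 26 \<Longrightarrow> \<exists>j. (T ^^ j) x mod 27 = 20"
proof -
  assume x: "x mod 27 = 26"
  have "x + 1 < 2 ^ (x+1)" by (rule less_exp)
  hence "\<not> 2 ^ (x+1) dvd (x+1)" using dvd_imp_le[of "2^(x+1)" "x+1"] by linarith
  thus ?thesis using trap_aux x by blast
qed

lemma avoid:
  assumes "\<forall>k. (T ^^ k) n mod 27 \<noteq> 20"
  shows "\<not> bad ((T ^^ k) n mod 27)"
proof
  assume "bad ((T ^^ k) n mod 27)"
  then consider "(T ^^ k) n mod 27 = 13" | "(T ^^ k) n mod 27 = 20" | "(T ^^ k) n mod 27 = 26"
    unfolding bad_def by blast
  thus False
  proof cases
    case 1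
    hence "(T ^^ Suc k) n mod 27 = 20" using step13 by simp
    thus False using assms by blast
  next
    case 2 thus False using assms by blast
  next
    case 3
    then obtain j where "(T ^^ j) ((T ^^ k) n) mod 27 = 20" using trap26 by blast
    hence "(T ^^ (j + k)) n mod 27 = 20" by (simp add: funpow_add)
    thus False using assms by blast
  qed
qed

lemma W_mono:
  assumes "n > 0" "\<forall>k. (T ^^ k) n mod 27 \<noteq> 20"
  shows "W ((T ^^ (k + i)) n) \<le> W ((T ^^ k) n)"
proof (induction i)
  case 0 show ?case by simp
next
  case (Suc i)
  have "W ((T ^^ (k + Suc i)) n) = W (T ((T ^^ (k + i)) n))" by simp
  also have "\<dots> \<le> W ((T ^^ (k + i)) n)"
    using Wstep(1)[OF Tk_pos[OF assms(1)] avoid[OF assms(2)] ] avoid[OF assms(2), of "Suc (k+i)"] by simp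
  finally show ?case using Suc.IH by linarith
qed

lemma le_W: "x \<le> W x" by (simp add: W_def)

lemma T1: "T 1 = 2" by (simp add: T_def)
lemma T2: "T 2 = 1" by (simp add: T_def)
lemma T1': "T (Suc 0) = 2" by (simp add: T_def)

lemma T12: "x \<in> {1,2} \<Longrightarrow> (T ^^ k) x \<in> {1,2}"
  by (induction k) (auto simp: T1' T2)

lemma orb12: "n \<in> {1,2} \<Longrightarrow> T_orbit n = {1,2}"
proof -
  assume n: "n \<in> {1,2}"
  have sub: "T_orbit n \<subseteq> {1,2}" unfolding T_orbit_def using T12[OF n] by blast
  have "1 \<in> T_orbit n \<and> 2 \<in> T_orbit n"
  proof (cases "n = 1")
    case True
    have "(T ^^ 0) n = 1" "(T ^^ 1) n = 2" using True T1 by auto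
    thus ?thesis unfolding T_orbit_def by (metis rangeI)
  next
    case False
    hence n2: "n = 2" using n by blast
    have "(T ^^ 0) n = 2" "(T ^^ 1) n = 1" using n2 T2 by auto
    thus ?thesis unfolding T_orbit_def by (metis rangeI)
  qed
  thus ?thesis using sub by auto
qed

lemma all_even:
  assumes "\<forall>i<k. even ((T ^^ i) n)"
  shows "(T ^^ k) n * 2 ^ k = n"
  using assms
proof (induction k)
  case 0 show ?case by simp
next
  case (Suc k)
  have ev: "even ((T ^^ k) n)" using Suc.prems by simp
  have "(T ^^ Suc k) n = (T ^^ k) n div 2" using ev by (simp add: T_def)
  hence "(T ^^ Suc k) n * 2 ^ Suc k = (T ^^ k) n * 2 ^ k" using ev by auto
  thus ?case using Suc by simp
qed

lemma funpow_mult_id: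
  assumes "(T ^^ p) n = n"
  shows "(T ^^ (m * p)) n = n"
proof (induction m)
  case 0 show ?case by simp
next
  case (Suc m)
  have "(T ^^ (Suc m * p)) n = (T ^^ p) ((T ^^ (m * p)) n)"
    by (simp add: funpow_add add.commute)
  thus ?case using Suc assms by simp
qed

theorem mainTheorem15:
  shows "(\<forall>n. divergent_orbit n \<longrightarrow> (\<exists>m\<in>T_orbit n. m mod 27 = 20))
       \<and> (\<forall>C. nontrivial_cycle C \<longrightarrow> (\<exists>m\<in>C. m mod 27 = 20))"
proof (intro conjI allI impI)
  fix n assume d: "divergent_orbit n"
  hence n0: "n > 0" and nb: "\<not> bdd_above (T_orbit n)" unfolding divergent_orbit_def by auto
  show "\<exists>m\<in>T_orbit n. m mod 27 = 20"
  proof (rule ccontr)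
    assume "\<not> (\<exists>m\<in>T_orbit n. m mod 27 = 20)"
    hence av: "\<forall>k. (T ^^ k) n mod 27 \<noteq> 20" unfolding T_orbit_def by auto
    have "\<forall>k. (T ^^ k) n \<le> W n"
    proof
      fix k
      have "(T ^^ k) n \<le> W ((T ^^ (0 + k)) n)" using le_W by simp
      also have "\<dots> \<le> W ((T ^^ 0) n)" by (rule W_mono[OF n0 av])
      finally show "(T ^^ k) n \<le> W n" by simp
    qed
    hence "bdd_above (T_orbit n)" unfolding T_orbit_def bdd_above_def by auto
    thus False using nb by simp
  qed
next
  fix C assume c: "nontrivial_cycle C"
  then obtain n p where n0: "n > 0" and p0: "p > 0" and pn: "(T ^^ p) n = n"
    and Cn: "C = T_orbit n" and C12: "C \<noteq> {1,2}"
    unfolding nontrivial_cycle_def by blast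
  show "\<exists>m\<in>C. m mod 27 = 20"
  proof (rule ccontr)
    assume "\<not> (\<exists>m\<in>C. m mod 27 = 20)"
    hence av: "\<forall>k. (T ^^ k) n mod 27 \<noteq> 20" unfolding Cn T_orbit_def by auto
    have Weq: "W ((T ^^ k) n) = W n" if "k \<le> p" for k
    proof -
      have "W ((T ^^ (k + (p - k))) n) \<le> W ((T ^^ k) n)" by (rule W_mono[OF n0 av])
      hence a: "W n \<le> W ((T ^^ k) n)" using that pn by simp
      have "W ((T ^^ (0 + k)) n) \<le> W ((T ^^ 0) n)" by (rule W_mono[OF n0 av])
      hence "W ((T ^^ k) n) \<le> W n" by simp
      thus ?thesis using a by simp
    qed
    have "\<exists>k<p. odd ((T ^^ k) n)"
    proof (rule ccontr)
      assume "\<not> (\<exists>k<p. odd ((T ^^ k) n))"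
      hence "(T ^^ p) n * 2 ^ p = n" using all_even by blast
      hence "n * 2 ^ p = n * 1" using pn by simp
      hence "(2::nat) ^ p = 1" using n0 by (metis mult_left_cancel not_gr0)
      thus False using p0 by simp
    qed
    then obtain k where kp: "k < p" and ok: "odd ((T ^^ k) n)" by blast
    have x1: "(T ^^ k) n = 1"
    proof (rule ccontr)
      assume "(T ^^ k) n \<noteq> 1"
      hence gt: "(T ^^ k) n > 1" using Tk_pos[OF n0, of k] by linarith
      have "W (T ((T ^^ k) n)) < W ((T ^^ k) n)"
        using Wstep(2)[OF Tk_pos[OF n0] avoid[OF av] _ ok gt] avoid[OF av, of "Suc k"] by simp
      moreover have "W ((T ^^ Suc k) n) = W n" using Weq[of "Suc k"] kp by simp
      moreover have "W ((T ^^ k) n) = W n" using Weq kp by simp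
      ultimately show False by simp
    qed
    have "k \<le> k * p" using p0 by simp
    hence "k * p = (k * p - k) + k" by simp
    hence "(T ^^ (k * p)) n = (T ^^ (k * p - k)) ((T ^^ k) n)"
      by (metis funpow_add comp_apply)
    hence "n = (T ^^ (k * p - k)) 1" using funpow_mult_id[OF pn, of k] x1 by simp
    hence "n \<in> {1,2}" using T12[of 1 "k * p - k"] by simp
    hence "C = {1,2}" using orb12 Cn by simp
    thus False using C12 by simp
  qed
qed

end
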